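(* For $n\ge 2$, $\frac{9}{5}(n-1)\le g(K_3,K_n)\le 2(n-1)$.
   Context: $K_m$ is the complete graph on $m$ vertices. A complete bipartite subgraph of a graph $G$ has two disjoint nonempty vertex classes $X,Y$ and edge set all $xy$ with $x\in X,y\in Y$. For graphs $G,H$, a block is a set $E(B_1)\times E(B_2)$ where $B_1$ is a complete bipartite subgraph of $G$ and $B_2$ a complete bipartite subgraph of $H$; $g(G,H)$ is the minimum number of blocks partitioning $E(G)\times E(H)$. *)

theory Defs
  imports Complex_Main
begin

text \<open>A (simple) graph is represented by its edge set: a set of 2-element vertex sets.\<close>

definition complete_graph :: "nat \<Rightarrow> nat set set" where
  "complete_graph m = {{i, j} | i j. i < m \<and> j < m \<and> i \<noteq> j}"

definition cbs_edge_sets :: "'a set set \<Rightarrow> 'a set set set" where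
  "cbs_edge_sets E = { {{x, y} | x y. x \<in> X \<and> y \<in> Y} | X Y.
      X \<noteq> {} \<and> Y \<noteq> {} \<and> X \<inter> Y = {} \<and> (\<forall>x\<in>X. \<forall>y\<in>Y. {x, y} \<in> E) }"

definition blocks :: "'a set set \<Rightarrow> 'b set set \<Rightarrow> ('a set \<times> 'b set) set set" where
  "blocks EG EH = { B1 \<times> B2 | B1 B2. B1 \<in> cbs_edge_sets EG \<and> B2 \<in> cbs_edge_sets EH }"

definition block_partition :: "'a set set \<Rightarrow> 'b set set \<Rightarrow> ('a set \<times> 'b set) set set \<Rightarrow> bool" where
  "block_partition EG EH P \<longleftrightarrow> finite P \<and> P \<subseteq> blocks EG EH
      \<and> (\<forall>A\<in>P. \<forall>B\<in>P. A \<noteq> B \<longrightarrow> A \<inter> B = {})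
      \<and> \<Union>P = EG \<times> EH"

definition g :: "'a set set \<Rightarrow> 'b set set \<Rightarrow> nat" where
  "g EG EH = (LEAST k. \<exists>P. block_partition EG EH P \<and> card P = k)"


end

theory Submission
  imports Defs
begin

definition F :: "nat set set \<Rightarrow> (nat \<Rightarrow> real) \<Rightarrow> real" where
  "F B x = (\<Sum>e\<in>B. \<Prod>v\<in>e. x v)"

lemma biclique_form:
  assumes "finite X" "finite Y" "X \<inter> Y = {}"
  shows "F {{a, b} | a b. a \<in> X \<and> b \<in> Y} x = (\<Sum>i\<in>X. x i) * (\<Sum>i\<in>Y. x i)"
proof -
  have eq: "{{a, b} | a b. a \<in> X \<and> b \<in> Y} = (\<lambda>(a,b). {a,b}) ` (X \<times> Y)" by auto
  have inj: "inj_on (\<lambda>(a,b). {a,b}) (X \<times> Y)"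
    using assms(3) by (auto simp: inj_on_def doubleton_eq_iff)
  have "F {{a, b} | a b. a \<in> X \<and> b \<in> Y} x = (\<Sum>p\<in>X \<times> Y. \<Prod>v\<in>(case p of (a,b) \<Rightarrow> {a,b}). x v)"
    unfolding F_def eq by (subst sum.reindex[OF inj]) (simp add: case_prod_beta)
  also have "\<dots> = (\<Sum>p\<in>X \<times> Y. x (fst p) * x (snd p))"
  proof (rule sum.cong)
    fix p assume "p \<in> X \<times> Y"
    then have "fst p \<noteq> snd p" using assms(3) by auto
    then show "(\<Prod>v\<in>(case p of (a,b) \<Rightarrow> {a,b}). x v) = x (fst p) * x (snd p)"
      by (simp add: case_prod_beta)
  qed simp
  also have "\<dots> = (\<Sum>i\<in>X. x i) * (\<Sum>i\<in>Y. x i)"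
    by (simp add: sum_product sum.cartesian_product case_prod_beta)
  finally show ?thesis .
qed

lemma complete_graph_Suc:
  "complete_graph (Suc n) = complete_graph n \<union> {{n, i} | i. i < n}"
  unfolding complete_graph_def
  by (auto simp: less_Suc_eq)

lemma finite_cg: "finite (complete_graph n)"
proof (rule finite_subset[of _ "Pow {..<n}"])
  show "complete_graph n \<subseteq> Pow {..<n}" unfolding complete_graph_def by auto
qed simp

lemma P_form2: "2 * F (complete_graph n) x = (\<Sum>i<n. x i)^2 - (\<Sum>i<n. (x i)^2)"
proof (induction n)
  case 0
  then show ?case by (simp add: F_def complete_graph_def)
next
  case (Suc n)
  have disj: "complete_graph n \<inter> {{n, i} | i. i < n} = {}"
    unfolding complete_graph_def
  proof (auto)
    fix i ia j assume h: "{n, ia} = {i, j}" "i < n" "j < n"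
    have "n \<in> {i, j}" using h(1) by blast
    then show False using h(2,3) by auto
  qed
  have st: "{{n, i} | i. i < n} = (\<lambda>i. {n,i}) ` {..<n}" by auto
  have fin2: "finite {{n, i} | i. i < n}" unfolding st by simp
  have inj: "inj_on (\<lambda>i. {n,i}) {..<n}" by (auto simp: inj_on_def doubleton_eq_iff)
  have "F {{n, i} | i. i < n} x = (\<Sum>i<n. x n * x i)"
    unfolding F_def st by (subst sum.reindex[OF inj]) auto
  also have "\<dots> = x n * (\<Sum>i<n. x i)" by (simp add: sum_distrib_left)
  finally have s: "F {{n, i} | i. i < n} x = x n * (\<Sum>i<n. x i)" .
  have "F (complete_graph (Suc n)) x = F (complete_graph n) x + F {{n, i} | i. i < n} x"
    unfolding complete_graph_Suc F_def
    by (rule sum.union_disjoint[OF finite_cg fin2 disj])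
  then show ?case using Suc s by (simp add: power2_eq_square algebra_simps)
qed

lemma kernel_exists:
  fixes as :: "(nat \<Rightarrow> real) list"
  assumes "finite V" "length as < card V"
  shows "\<exists>x. (\<forall>i. i \<notin> V \<longrightarrow> x i = 0) \<and> (\<exists>i\<in>V. x i \<noteq> 0) \<and> (\<forall>a\<in>set as. (\<Sum>i\<in>V. a i * x i) = 0)"
  using assms
proof (induction "length as" arbitrary: as V)
  case 0
  then obtain j where "j \<in> V" by fastforce
  then show ?case using 0 by (rule_tac x="\<lambda>i. if i = j then 1 else 0" in exI) auto
next
  case (Suc m)
  then obtain a as' where aas: "as = a # as'" by (cases as) auto
  show ?case
  proof (cases "\<forall>i\<in>V. a i = 0")
    case True
    from Suc.hyps(1)[of as' V] Suc.hyps(2) Suc.prems aas obtain x where x: "\<forall>i. i \<notin> V \<longrightarrow> x i = 0" "\<exists>i\<in>V. x i \<noteq> 0"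
      "\<forall>a\<in>set as'. (\<Sum>i\<in>V. a i * x i) = 0" by auto
    then show ?thesis using True aas by (rule_tac x=x in exI) auto
  next
    case False
    then obtain j where j: "j \<in> V" "a j \<noteq> 0" by auto
    define V' where "V' = V - {j}"
    have fV': "finite V'" using Suc.prems V'_def by auto
    have cV': "card V' = card V - 1" using j V'_def Suc.prems by auto
    define bs where "bs = map (\<lambda>b. \<lambda>i. b i - b j * a i / a j) as'"
    have "length bs < card V'" using Suc.prems cV' bs_def aas Suc.hyps(2) by auto
    moreover have "m = length bs" using bs_def aas Suc.hyps(2) by auto
    ultimately obtain y where y: "\<forall>i. i \<notin> V' \<longrightarrow> y i = 0" "\<exists>i\<in>V'. y i \<noteq> 0"
      "\<forall>b\<in>set bs. (\<Sum>i\<in>V'. b i * y i) = 0" using Suc.hyps(1)[OF _ fV'] by blast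
    define t where "t = - (\<Sum>i\<in>V'. a i * y i) / a j"
    define x where "x = y(j := t)"
    have sumV: "(\<Sum>i\<in>V. c i * x i) = c j * t + (\<Sum>i\<in>V'. c i * y i)" for c
    proof -
      have "(\<Sum>i\<in>V. c i * x i) = c j * x j + (\<Sum>i\<in>V'. c i * x i)"
        unfolding V'_def using j Suc.prems(1) by (simp add: sum.remove)
      moreover have "(\<Sum>i\<in>V'. c i * x i) = (\<Sum>i\<in>V'. c i * y i)"
        by (rule sum.cong) (auto simp: x_def V'_def)
      ultimately show ?thesis by (simp add: x_def)
    qed
    have "\<forall>i. i \<notin> V \<longrightarrow> x i = 0" using y(1) j V'_def x_def by auto
    moreover have "\<exists>i\<in>V. x i \<noteq> 0" using y(2) V'_def x_def by auto
    moreover have "(\<Sum>i\<in>V. a i * x i) = 0" using sumV[of a] j(2) by (simp add: t_def)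
    moreover have "(\<Sum>i\<in>V. b i * x i) = 0" if b: "b \<in> set as'" for b
    proof -
      have "(\<Sum>i\<in>V'. (b i - b j * a i / a j) * y i) = 0" using y(3) b bs_def aas Suc.hyps(2) by auto
      then have "(\<Sum>i\<in>V'. b i * y i) - b j / a j * (\<Sum>i\<in>V'. a i * y i) = 0"
        by (simp add: algebra_simps sum_subtractf sum_distrib_left)
      then show ?thesis using sumV[of b] j(2) by (simp add: t_def field_simps)
    qed
    ultimately show ?thesis using aas by (rule_tac x=x in exI) auto
  qed
qed

lemma count_bound:
  fixes K :: "'i set" and c :: "'i \<Rightarrow> real" and G :: "'i \<Rightarrow> (nat \<Rightarrow> real) \<Rightarrow> real"
  assumes fin: "finite K"
    and lin: "\<And>k. k \<in> K \<Longrightarrow> \<exists>a. \<forall>x. (\<Sum>i<n. a i * x i) = 0 \<longrightarrow> G k x = 0"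
    and ident: "\<And>x. (\<Sum>k\<in>K. c k * G k x) = F (complete_graph n) x"
  shows "n - 1 \<le> card {k\<in>K. c k \<noteq> 0}"
proof (rule ccontr)
  assume "\<not> ?thesis"
  then have lt: "card {k\<in>K. c k \<noteq> 0} + 1 < n" by simp
  define K' where "K' = {k\<in>K. c k \<noteq> 0}"
  have finK': "finite K'" using fin K'_def by simp
  have "\<forall>k\<in>K. \<exists>a. \<forall>x. (\<Sum>i<n. a i * x i) = 0 \<longrightarrow> G k x = 0" using lin by blast
  then obtain a where a: "\<And>k x. k \<in> K \<Longrightarrow> (\<Sum>i<n. a k i * x i) = 0 \<Longrightarrow> G k x = 0"
    by metis
  obtain ks where ks: "set ks = K'" "distinct ks" using finite_distinct_list[OF finK'] by blast
  define as where "as = (\<lambda>i. 1) # map a ks"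
  have "length as = card K' + 1" using ks distinct_card[of ks] as_def by simp
  then have "length as < card {..<n}" using lt K'_def by simp
  from kernel_exists[OF _ this] obtain x where x: "\<forall>i. i \<notin> {..<n} \<longrightarrow> x i = 0"
    "\<exists>i\<in>{..<n}. x i \<noteq> 0" "\<forall>b\<in>set as. (\<Sum>i\<in>{..<n}. b i * x i) = 0" by blast
  have s0: "(\<Sum>i<n. x i) = 0" using x(3) as_def by simp
  have G0: "G k x = 0" if "k \<in> K'" for k
  proof -
    have "a k \<in> set as" using that ks as_def by simp
    then have "(\<Sum>i<n. a k i * x i) = 0" using x(3) by blast
    then show ?thesis using a[of k x] that K'_def by simp
  qed
  have "(\<Sum>k\<in>K. c k * G k x) = 0"
  proof (rule sum.neutral, rule ballI)
    fix k assume "k \<in> K"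
    then show "c k * G k x = 0" using G0[of k] K'_def by (cases "c k = 0") auto
  qed
  then have "F (complete_graph n) x = 0" using ident by simp
  then have "(\<Sum>i<n. (x i)^2) = 0" using P_form2[of n x] s0 by simp
  then have "\<forall>i\<in>{..<n}. (x i)^2 = 0" by (subst (asm) sum_nonneg_eq_0_iff) auto
  then show False using x(2) by auto
qed

lemma cg_mem: "{u, v} \<in> complete_graph n \<Longrightarrow> u < n"
  unfolding complete_graph_def
proof auto
  fix i j assume h: "{u, v} = {i, j}" "i < n" "j < n"
  have "u \<in> {i, j}" using h(1) by blast
  then show "u < n" using h(2,3) by auto
qed

lemma cbs_lin:
  assumes "B \<in> cbs_edge_sets (complete_graph n)"
  shows "\<exists>a. \<forall>x. (\<Sum>i<n. a i * x i) = 0 \<longrightarrow> F B x = 0"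
proof -
  obtain X Y where B: "B = {{x, y} | x y. x \<in> X \<and> y \<in> Y}" "X \<noteq> {}" "Y \<noteq> {}" "X \<inter> Y = {}"
    "\<forall>x\<in>X. \<forall>y\<in>Y. {x, y} \<in> complete_graph n"
    using assms unfolding cbs_edge_sets_def by blast
  have XS: "X \<subseteq> {..<n}"
  proof
    fix u assume "u \<in> X"
    moreover obtain v where "v \<in> Y" using B(3) by blast
    ultimately show "u \<in> {..<n}" using B(5) cg_mem by blast
  qed
  have YS: "Y \<subseteq> {..<n}"
  proof
    fix v assume "v \<in> Y"
    moreover obtain u where "u \<in> X" using B(2) by blast
    ultimately have "{v, u} \<in> complete_graph n" using B(5) by (metis insert_commute)
    then show "v \<in> {..<n}" using cg_mem by blast
  qed
  have fX: "finite X" using XS finite_subset by blast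
  have fY: "finite Y" using YS finite_subset by blast
  show ?thesis
  proof (rule exI[of _ "\<lambda>i. if i \<in> X then 1 else 0"], intro allI impI)
    fix x :: "nat \<Rightarrow> real"
    assume h0: "(\<Sum>i<n. (if i \<in> X then 1 else 0) * x i) = 0"
    have "(\<Sum>i<n. (if i \<in> X then 1 else 0) * x i) = (\<Sum>i<n. if i \<in> X then x i else 0)"
      by (rule sum.cong) auto
    then have "(\<Sum>i<n. if i \<in> X then x i else 0) = 0" using h0 by simp
    then have "(\<Sum>i\<in>{..<n} \<inter> X. x i) = 0" by (simp add: sum.inter_restrict)
    moreover have "{..<n} \<inter> X = X" using XS by blast
    ultimately have "(\<Sum>i\<in>X. x i) = 0" by simp
    then show "F B x = 0" using biclique_form[OF fX fY B(4)] B(1) by simp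
  qed
qed

lemma cbs_ne: "B \<in> cbs_edge_sets E \<Longrightarrow> B \<noteq> {}"
  unfolding cbs_edge_sets_def by blast

lemma K3_not_all:
  assumes "B \<in> cbs_edge_sets E"
  shows "\<not> ({0, 1} \<in> B \<and> {0, 2} \<in> B \<and> {1::nat, 2} \<in> B)"
proof
  assume h: "{0, 1} \<in> B \<and> {0, 2} \<in> B \<and> {1::nat, 2} \<in> B"
  obtain X Y where B: "B = {{x, y} | x y. x \<in> X \<and> y \<in> Y}" "X \<inter> Y = {}"
    using assms unfolding cbs_edge_sets_def by blast
  have "(0 \<in> X \<and> 1 \<in> Y) \<or> (1 \<in> X \<and> 0 \<in> Y)" using h B(1) by (auto simp: doubleton_eq_iff)
  moreover have "(0 \<in> X \<and> 2 \<in> Y) \<or> (2 \<in> X \<and> 0 \<in> Y)" using h B(1) by (auto simp: doubleton_eq_iff)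
  moreover have "(1 \<in> X \<and> 2 \<in> Y) \<or> (2 \<in> X \<and> 1 \<in> Y)" using h B(1) by (auto simp: doubleton_eq_iff)
  ultimately show False using B(2) by blast
qed

lemma K3_eq: "complete_graph 3 = {{0, 1}, {0, 2}, {1, 2}}"
  unfolding complete_graph_def
proof (auto simp: eval_nat_numeral less_Suc_eq)
qed

lemma card_filter_sum: "finite P \<Longrightarrow> card {A\<in>P. Q A} = (\<Sum>A\<in>P. if Q A then 1 else 0 :: nat)"
  by (simp add: sum.inter_filter[symmetric])

lemma lower_bound:
  assumes bp: "block_partition (complete_graph 3) (complete_graph n) P"
  shows "9 * (n - 1) \<le> 5 * card P"
proof -
  define E3 where "E3 = complete_graph 3"
  define En where "En = complete_graph n"
  have finP: "finite P" and sub: "P \<subseteq> blocks E3 En"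
    and disj: "\<forall>A\<in>P. \<forall>B\<in>P. A \<noteq> B \<longrightarrow> A \<inter> B = {}" and un: "\<Union>P = E3 \<times> En"
    using bp unfolding block_partition_def E3_def En_def by auto
  define b1 where "b1 A = fst ` A" for A :: "(nat set \<times> nat set) set"
  define b2 where "b2 A = snd ` A" for A :: "(nat set \<times> nat set) set"
  have str: "A = b1 A \<times> b2 A \<and> b1 A \<in> cbs_edge_sets E3 \<and> b2 A \<in> cbs_edge_sets En" if AP: "A \<in> P" for A
  proof -
    obtain B1 B2 where AB: "A = B1 \<times> B2" "B1 \<in> cbs_edge_sets E3" "B2 \<in> cbs_edge_sets En"
      using sub AP unfolding blocks_def by blast
    have "B1 \<noteq> {}" "B2 \<noteq> {}" using AB cbs_ne by auto
    then have "b1 A = B1" "b2 A = B2" using AB unfolding b1_def b2_def by auto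
    then show ?thesis using AB by simp
  qed
  have b2sub: "b2 A \<subseteq> En" if "A \<in> P" for A
    using that un unfolding b2_def by force
  have finEn: "finite En" unfolding En_def by (rule finite_cg)
  have edge: "F En x = (\<Sum>A\<in>P. (if e \<in> b1 A then 1 else 0) * F (b2 A) x)" if e: "e \<in> E3" for e x
  proof -
    define Pe where "Pe = {A\<in>P. e \<in> b1 A}"
    have "(\<Sum>A\<in>P. (if e \<in> b1 A then 1 else 0) * F (b2 A) x) = (\<Sum>A\<in>P. if e \<in> b1 A then F (b2 A) x else 0)"
      by (rule sum.cong) auto
    also have "\<dots> = (\<Sum>A\<in>Pe. F (b2 A) x)"
      unfolding Pe_def using finP by (simp add: sum.inter_filter)
    finally have r: "(\<Sum>A\<in>P. (if e \<in> b1 A then 1 else 0) * F (b2 A) x) = (\<Sum>A\<in>Pe. F (b2 A) x)" .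
    have U: "En = \<Union>(b2 ` Pe)"
    proof
      show "En \<subseteq> \<Union>(b2 ` Pe)"
      proof
        fix f assume "f \<in> En"
        then have "(e, f) \<in> \<Union>P" using un e by simp
        then obtain A where "A \<in> P" "(e, f) \<in> A" by blast
        then have "A \<in> Pe" "f \<in> b2 A" unfolding Pe_def b1_def b2_def by force+
        then show "f \<in> \<Union>(b2 ` Pe)" by blast
      qed
      show "\<Union>(b2 ` Pe) \<subseteq> En" using b2sub unfolding Pe_def by blast
    qed
    have "F En x = (\<Sum>A\<in>Pe. F (b2 A) x)"
      unfolding F_def
    proof (subst U, rule sum.UNION_disjoint)
      show "finite Pe" unfolding Pe_def using finP by simp
      show "\<forall>A\<in>Pe. finite (b2 A)" using b2sub finEn finite_subset unfolding Pe_def by blast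
      show "\<forall>A\<in>Pe. \<forall>B\<in>Pe. A \<noteq> B \<longrightarrow> b2 A \<inter> b2 B = {}"
      proof (intro ballI impI)
        fix A B assume AB: "A \<in> Pe" "B \<in> Pe" "A \<noteq> B"
        show "b2 A \<inter> b2 B = {}"
        proof (rule ccontr)
          assume "b2 A \<inter> b2 B \<noteq> {}"
          then obtain f where f: "f \<in> b2 A" "f \<in> b2 B" by blast
          have "(e, f) \<in> A" using str[of A] AB f unfolding Pe_def by auto
          moreover have "(e, f) \<in> B" using str[of B] AB f unfolding Pe_def by auto
          ultimately show False using disj AB unfolding Pe_def by blast
        qed
      qed
    qed
    then show ?thesis using r by simp
  qed
  define ce where "ce e A = (if e \<in> b1 A then 1 else 0 :: real)" for e A
  have lin: "\<exists>a. \<forall>x. (\<Sum>i<n. a i * x i) = 0 \<longrightarrow> F (b2 A) x = 0" if "A \<in> P" for A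
    using cbs_lin str[OF that] unfolding En_def by blast
  have I: "n - 1 \<le> card {A\<in>P. ce e A \<noteq> 0}" if "e \<in> E3" for e
  proof (rule count_bound[OF finP lin])
    fix x
    show "(\<Sum>A\<in>P. ce e A * F (b2 A) x) = F (complete_graph n) x"
      using edge[OF that, of x] unfolding ce_def En_def by simp
  qed simp
  have II: "n - 1 \<le> card {A\<in>P. ce e A + ce e' A - ce e'' A \<noteq> 0}"
    if "e \<in> E3" "e' \<in> E3" "e'' \<in> E3" for e e' e''
  proof (rule count_bound[OF finP lin])
    fix x
    have "(\<Sum>A\<in>P. (ce e A + ce e' A - ce e'' A) * F (b2 A) x)
      = (\<Sum>A\<in>P. ce e A * F (b2 A) x) + (\<Sum>A\<in>P. ce e' A * F (b2 A) x) - (\<Sum>A\<in>P. ce e'' A * F (b2 A) x)"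
      by (simp add: algebra_simps sum.distrib sum_subtractf)
    also have "\<dots> = F En x" using edge[OF that(1)] edge[OF that(2)] edge[OF that(3)]
      by (simp add: ce_def)
    finally show "(\<Sum>A\<in>P. (ce e A + ce e' A - ce e'' A) * F (b2 A) x) = F (complete_graph n) x"
      unfolding En_def .
  qed (simp add: that)
  define e1 where "e1 = {0, 1::nat}"
  define e2 where "e2 = {0, 2::nat}"
  define e3 where "e3 = {1, 2::nat}"
  have E3eq: "E3 = {e1, e2, e3}" unfolding E3_def e1_def e2_def e3_def by (rule K3_eq)
  have inE: "e1 \<in> E3" "e2 \<in> E3" "e3 \<in> E3" using E3eq by auto
  define ind where "ind Q = (if Q then 1 else 0 :: nat)" for Q
  have pw: "2 * ind (ce e1 A \<noteq> 0) + 2 * ind (ce e2 A \<noteq> 0) + 2 * ind (ce e3 A \<noteq> 0)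
      + ind (ce e1 A + ce e2 A - ce e3 A \<noteq> 0) + ind (ce e1 A + ce e3 A - ce e2 A \<noteq> 0)
      + ind (ce e2 A + ce e3 A - ce e1 A \<noteq> 0) = 5" if "A \<in> P" for A
  proof -
    have s: "b1 A \<in> cbs_edge_sets E3" using str[OF that] by blast
    have "b1 A \<noteq> {}" using cbs_ne[OF s] .
    moreover have "b1 A \<subseteq> E3" using that un unfolding b1_def by force
    ultimately have ne: "e1 \<in> b1 A \<or> e2 \<in> b1 A \<or> e3 \<in> b1 A" using E3eq by blast
    have na: "\<not> (e1 \<in> b1 A \<and> e2 \<in> b1 A \<and> e3 \<in> b1 A)"
      using K3_not_all[OF s] unfolding e1_def e2_def e3_def .
    show ?thesis using ne na unfolding ce_def ind_def
      by (cases "e1 \<in> b1 A"; cases "e2 \<in> b1 A"; cases "e3 \<in> b1 A") auto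
  qed
  have "(\<Sum>A\<in>P. 2 * ind (ce e1 A \<noteq> 0) + 2 * ind (ce e2 A \<noteq> 0) + 2 * ind (ce e3 A \<noteq> 0)
      + ind (ce e1 A + ce e2 A - ce e3 A \<noteq> 0) + ind (ce e1 A + ce e3 A - ce e2 A \<noteq> 0)
      + ind (ce e2 A + ce e3 A - ce e1 A \<noteq> 0)) = (\<Sum>A\<in>P. 5)"
    by (rule sum.cong[OF refl]) (rule pw)
  then have tot: "2 * card {A\<in>P. ce e1 A \<noteq> 0} + 2 * card {A\<in>P. ce e2 A \<noteq> 0} + 2 * card {A\<in>P. ce e3 A \<noteq> 0}
      + card {A\<in>P. ce e1 A + ce e2 A - ce e3 A \<noteq> 0} + card {A\<in>P. ce e1 A + ce e3 A - ce e2 A \<noteq> 0}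
      + card {A\<in>P. ce e2 A + ce e3 A - ce e1 A \<noteq> 0} = 5 * card P"
    using finP by (simp add: card_filter_sum sum.distrib sum_distrib_left ind_def)
  have "n - 1 \<le> card {A\<in>P. ce e1 A \<noteq> 0}" "n - 1 \<le> card {A\<in>P. ce e2 A \<noteq> 0}"
    "n - 1 \<le> card {A\<in>P. ce e3 A \<noteq> 0}" using I inE by auto
  moreover have "n - 1 \<le> card {A\<in>P. ce e1 A + ce e2 A - ce e3 A \<noteq> 0}"
    "n - 1 \<le> card {A\<in>P. ce e1 A + ce e3 A - ce e2 A \<noteq> 0}"
    "n - 1 \<le> card {A\<in>P. ce e2 A + ce e3 A - ce e1 A \<noteq> 0}" using II inE by auto
  ultimately show ?thesis using tot by linarith
qed

definition St :: "nat \<Rightarrow> nat set set" where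
  "St k = {{x, y} | x y. x \<in> {k} \<and> y \<in> {..<k}}"

lemma St_cbs: "1 \<le> k \<Longrightarrow> k < n \<Longrightarrow> St k \<in> cbs_edge_sets (complete_graph n)"
  unfolding cbs_edge_sets_def St_def
proof (rule CollectI, rule exI[of _ "{k}"], rule exI[of _ "{..<k}"], intro conjI)
  assume "1 \<le> k" "k < n"
  then have "0 \<in> {..<k}" by simp
  then show "{..<k} \<noteq> {}" by blast
  show "\<forall>x\<in>{k}. \<forall>y\<in>{..<k}. {x, y} \<in> complete_graph n"
    unfolding complete_graph_def using \<open>k < n\<close>
    apply auto
    subgoal for y by (rule exI[of _ k], rule exI[of _ y]) auto
    done
qed auto

lemma St_ne: "1 \<le> k \<Longrightarrow> St k \<noteq> {}"
proof -
  assume "1 \<le> k"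
  then have "{k, 0} \<in> St k" unfolding St_def by auto
  then show ?thesis by blast
qed

lemma St_disj: "k \<noteq> k' \<Longrightarrow> St k \<inter> St k' = {}"
  unfolding St_def
proof auto
  fix y y' assume h: "k \<noteq> k'" "y < k" "y' < k'" "{k, y} = {k', y'}"
  then show False by (auto simp: doubleton_eq_iff)
qed

lemma St_union: "(\<Union>k\<in>{1..<n}. St k) = complete_graph n"
proof
  show "(\<Union>k\<in>{1..<n}. St k) \<subseteq> complete_graph n"
    unfolding St_def complete_graph_def
    apply auto
    subgoal for x y by (rule exI[of _ x], rule exI[of _ y]) auto
    done
  show "complete_graph n \<subseteq> (\<Union>k\<in>{1..<n}. St k)"
  proof
    fix e assume "e \<in> complete_graph n"
    then obtain i j where e: "e = {i, j}" "i < n" "j < n" "i \<noteq> j"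
      unfolding complete_graph_def by blast
    show "e \<in> (\<Union>k\<in>{1..<n}. St k)"
    proof (cases "i < j")
      case True
      then have "e \<in> St j" unfolding St_def using e by (auto simp: insert_commute)
      then show ?thesis using e True by auto
    next
      case False
      then have "e \<in> St i" unfolding St_def using e by auto
      then show ?thesis using e False by auto
    qed
  qed
qed

definition S12 :: "nat set set" where "S12 = {{x, y} | x y. x \<in> {0} \<and> y \<in> {1, 2}}"
definition S3 :: "nat set set" where "S3 = {{x, y} | x y. x \<in> {1} \<and> y \<in> {2}}"

lemma S12_eq: "S12 = {{0, 1}, {0, 2}}" unfolding S12_def by auto
lemma S3_eq: "S3 = {{1, 2}}" unfolding S3_def by auto

lemma S12_cbs: "S12 \<in> cbs_edge_sets (complete_graph 3)"
  unfolding cbs_edge_sets_def S12_def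
proof (rule CollectI, rule exI[of _ "{0}"], rule exI[of _ "{1,2}"], intro conjI)
  show "\<forall>x\<in>{0::nat}. \<forall>y\<in>{1, 2}. {x, y} \<in> complete_graph 3" by (simp add: K3_eq)
qed auto

lemma S3_cbs: "S3 \<in> cbs_edge_sets (complete_graph 3)"
  unfolding cbs_edge_sets_def S3_def
proof (rule CollectI, rule exI[of _ "{1}"], rule exI[of _ "{2}"], intro conjI)
  show "\<forall>x\<in>{1::nat}. \<forall>y\<in>{2}. {x, y} \<in> complete_graph 3" by (simp add: K3_eq)
qed auto

lemma S_disj: "S12 \<inter> S3 = {}"
  unfolding S12_eq S3_eq by (auto simp: doubleton_eq_iff)

lemma upper_construction:
  assumes "n \<ge> 1"
  shows "\<exists>P. block_partition (complete_graph 3) (complete_graph n) P \<and> card P = 2 * (n - 1)"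
proof -
  define I where "I = {1..<n}"
  define P1 where "P1 = (\<lambda>k. S12 \<times> St k) ` I"
  define P2 where "P2 = (\<lambda>k. S3 \<times> St k) ` I"
  define P where "P = P1 \<union> P2"
  have S12ne: "S12 \<noteq> {}" and S3ne: "S3 \<noteq> {}" by (auto simp: S12_eq S3_eq)
  have inj1: "inj_on (\<lambda>k. S12 \<times> St k) I"
  proof (rule inj_onI)
    fix k k' assume "k \<in> I" "k' \<in> I" "S12 \<times> St k = S12 \<times> St k'"
    then have "St k = St k'" using S12ne St_ne unfolding I_def by (auto simp: times_eq_iff)
    then show "k = k'" using St_disj St_ne \<open>k \<in> I\<close> unfolding I_def by fastforce
  qed
  have inj2: "inj_on (\<lambda>k. S3 \<times> St k) I"
  proof (rule inj_onI)
    fix k k' assume "k \<in> I" "k' \<in> I" "S3 \<times> St k = S3 \<times> St k'"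
    then have "St k = St k'" using S3ne St_ne unfolding I_def by (auto simp: times_eq_iff)
    then show "k = k'" using St_disj St_ne \<open>k \<in> I\<close> unfolding I_def by fastforce
  qed
  have d12: "P1 \<inter> P2 = {}"
  proof (rule ccontr)
    assume "P1 \<inter> P2 \<noteq> {}"
    then obtain k k' where "k \<in> I" "k' \<in> I" "S12 \<times> St k = S3 \<times> St k'"
      unfolding P1_def P2_def by blast
    then have "S12 = S3" using S12ne S3ne St_ne unfolding I_def by (auto simp: times_eq_iff)
    then show False using S_disj S12ne by blast
  qed
  have cardP: "card P = 2 * (n - 1)"
  proof -
    have "card P = card P1 + card P2" unfolding P_def
      by (rule card_Un_disjoint) (use d12 in \<open>auto simp: P1_def P2_def I_def\<close>)
    also have "\<dots> = card I + card I" unfolding P1_def P2_def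
      using card_image[OF inj1] card_image[OF inj2] by simp
    finally show ?thesis unfolding I_def by simp
  qed
  have mem: "A \<in> P \<Longrightarrow> \<exists>S k. A = S \<times> St k \<and> (S = S12 \<or> S = S3) \<and> k \<in> I" for A
    unfolding P_def P1_def P2_def by blast
  have bp: "block_partition (complete_graph 3) (complete_graph n) P"
    unfolding block_partition_def
  proof (intro conjI)
    show "finite P" unfolding P_def P1_def P2_def I_def by simp
    show "P \<subseteq> blocks (complete_graph 3) (complete_graph n)"
    proof
      fix A assume "A \<in> P"
      then obtain S k where A: "A = S \<times> St k" "S = S12 \<or> S = S3" "k \<in> I" using mem by blast
      have "St k \<in> cbs_edge_sets (complete_graph n)" using A(3) St_cbs unfolding I_def by auto
      moreover have "S \<in> cbs_edge_sets (complete_graph 3)" using A(2) S12_cbs S3_cbs by auto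
      ultimately show "A \<in> blocks (complete_graph 3) (complete_graph n)"
        unfolding blocks_def using A(1) by blast
    qed
    show "\<forall>A\<in>P. \<forall>B\<in>P. A \<noteq> B \<longrightarrow> A \<inter> B = {}"
    proof (intro ballI impI)
      fix A B assume AB: "A \<in> P" "B \<in> P" "A \<noteq> B"
      obtain S k where A: "A = S \<times> St k" "S = S12 \<or> S = S3" "k \<in> I" using mem AB(1) by blast
      obtain S' k' where B: "B = S' \<times> St k'" "S' = S12 \<or> S' = S3" "k' \<in> I" using mem AB(2) by blast
      show "A \<inter> B = {}"
      proof (cases "S = S' \<and> k = k'")
        case True
        then show ?thesis using A B AB(3) by simp
      next
        case False
        then have "S \<inter> S' = {} \<or> St k \<inter> St k' = {}"
          using A(2) B(2) S_disj St_disj by auto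
        then show ?thesis using A(1) B(1) by auto
      qed
    qed
    show "\<Union>P = complete_graph 3 \<times> complete_graph n"
    proof
      show "\<Union>P \<subseteq> complete_graph 3 \<times> complete_graph n"
      proof
        fix p assume "p \<in> \<Union>P"
        then obtain A where "A \<in> P" "p \<in> A" by blast
        then obtain S k where A: "A = S \<times> St k" "S = S12 \<or> S = S3" "k \<in> I" "p \<in> A" using mem by blast
        have "St k \<subseteq> complete_graph n" using St_union A(3) unfolding I_def by blast
        moreover have "S \<subseteq> complete_graph 3" using A(2) by (auto simp: S12_eq S3_eq K3_eq)
        ultimately show "p \<in> complete_graph 3 \<times> complete_graph n" using A by auto
      qed
      show "complete_graph 3 \<times> complete_graph n \<subseteq> \<Union>P"
      proof
        fix p assume "p \<in> complete_graph 3 \<times> complete_graph n"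
        then obtain e f where p: "p = (e, f)" "e \<in> complete_graph 3" "f \<in> complete_graph n" by blast
        obtain k where k: "k \<in> I" "f \<in> St k" using p(3) St_union unfolding I_def by blast
        have "e \<in> S12 \<or> e \<in> S3" using p(2) by (auto simp: S12_eq S3_eq K3_eq)
        then show "p \<in> \<Union>P"
        proof
          assume "e \<in> S12"
          then have "p \<in> S12 \<times> St k" using p k by simp
          moreover have "S12 \<times> St k \<in> P" using k unfolding P_def P1_def by blast
          ultimately show ?thesis by blast
        next
          assume "e \<in> S3"
          then have "p \<in> S3 \<times> St k" using p k by simp
          moreover have "S3 \<times> St k \<in> P" using k unfolding P_def P2_def by blast
          ultimately show ?thesis by blast
        qed
      qed
    qed
  qed
  show ?thesis using bp cardP by blast
qed

theorem mainTheorem6: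
  fixes n :: nat
  assumes "n \<ge> 2"
  shows "9 / 5 * (real n - 1) \<le> real (g (complete_graph 3) (complete_graph n))
       \<and> real (g (complete_graph 3) (complete_graph n)) \<le> 2 * (real n - 1)"
proof -
  let ?Q = "\<lambda>k. \<exists>P. block_partition (complete_graph 3) (complete_graph n) P \<and> card P = k"
  obtain P0 where P0: "block_partition (complete_graph 3) (complete_graph n) P0" "card P0 = 2 * (n - 1)"
    using upper_construction[of n] assms by auto
  have Qc: "?Q (2 * (n - 1))" using P0 by blast
  have gdef: "g (complete_graph 3) (complete_graph n) = (LEAST k. ?Q k)" unfolding g_def by simp
  have le: "g (complete_graph 3) (complete_graph n) \<le> 2 * (n - 1)"
    unfolding gdef by (rule Least_le[where P="?Q", OF Qc])
  have "?Q (LEAST k. ?Q k)" by (rule LeastI[where P="?Q", OF Qc])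
  then obtain P where P: "block_partition (complete_graph 3) (complete_graph n) P"
    "card P = g (complete_graph 3) (complete_graph n)" unfolding gdef by blast
  have ge: "9 * (n - 1) \<le> 5 * g (complete_graph 3) (complete_graph n)"
    using lower_bound[OF P(1)] P(2) by simp
  have rn: "real (n - 1) = real n - 1" using assms by simp
  have "real (9 * (n - 1)) \<le> real (5 * g (complete_graph 3) (complete_graph n))"
    using ge by (rule of_nat_mono)
  then have a: "9 / 5 * (real n - 1) \<le> real (g (complete_graph 3) (complete_graph n))"
    using rn by simp
  have "real (g (complete_graph 3) (complete_graph n)) \<le> real (2 * (n - 1))"
    using le by (rule of_nat_mono)
  then have b: "real (g (complete_graph 3) (complete_graph n)) \<le> 2 * (real n - 1)"
    using rn by simp
  show ?thesis using a b by blast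
qed

end
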